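(* Let $k,a,b$ be positive real numbers and $\{S^{(a,b)}_{k,n}\}_{n\ge0}$ the $k$-FL sequence. For any integers $n\ge r\ge0$, $S^{(a,b)}_{k,n-r}S^{(a,b)}_{k,n+r}-(S^{(a,b)}_{k,n})^2=(-1)^{n-r+1}\{a^2-(k^2+4)b^2\}F_{k,r}^2$.
   Context: The $k$-FL sequence (for positive reals $k,a,b$) is $S^{(a,b)}_{k,0}=2b$, $S^{(a,b)}_{k,1}=bk+a$, $S^{(a,b)}_{k,n}=kS^{(a,b)}_{k,n-1}+S^{(a,b)}_{k,n-2}$. $F_{k,n}$ is the $k$-Fibonacci sequence: $F_{k,0}=0$, $F_{k,1}=1$, $F_{k,n}=kF_{k,n-1}+F_{k,n-2}$. *)

theory Defs
  imports Complex_Main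
begin

fun kfib :: "real \<Rightarrow> nat \<Rightarrow> real" where
  "kfib k 0 = 0"
| "kfib k (Suc 0) = 1"
| "kfib k (Suc (Suc n)) = k * kfib k (Suc n) + kfib k n"

fun kFL :: "real \<Rightarrow> real \<Rightarrow> real \<Rightarrow> nat \<Rightarrow> real" where
  "kFL k a b 0 = 2 * b"
| "kFL k a b (Suc 0) = b * k + a"
| "kFL k a b (Suc (Suc n)) = k * kFL k a b (Suc n) + kFL k a b n"

end

theory Submission
  imports Defs
begin

lemma binet:
  fixes k s p q :: real
  assumes pq: "p + q = k" "p * q = -1" "p - q = s"
  shows "s * kfib k n = p^n - q^n \<and> s * kFL k a b n = (a + b*s)*p^n + (b*s - a)*q^n"
proof (induction n rule: nat_less_induct)
  case (1 n)
  have "p^2 = p*(p+q) - p*q" by (simp add: power2_eq_square algebra_simps)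
  hence p2: "p^2 = k*p + 1" using pq by (simp add: algebra_simps)
  have "q^2 = q*(p+q) - p*q" by (simp add: power2_eq_square algebra_simps)
  hence q2: "q^2 = k*q + 1" using pq by (simp add: algebra_simps)
  show ?case
  proof (cases n)
    case 0 then show ?thesis using pq by (simp add: algebra_simps)
  next
    case (Suc m) note m = this
    show ?thesis
    proof (cases m)
      case 0
      have "(a + b*s)*p + (b*s - a)*q = a*(p-q) + b*s*(p+q)" by (simp add: algebra_simps)
      then show ?thesis using pq m 0 by (simp add: algebra_simps)
    next
      case (Suc j)
      have "p^(Suc (Suc j)) = p^j * p^2" by (simp add: power2_eq_square)
      hence P: "p^(Suc (Suc j)) = k * p^(Suc j) + p^j" using p2 by (simp add: algebra_simps)
      have "q^(Suc (Suc j)) = q^j * q^2" by (simp add: power2_eq_square)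
      hence Q: "q^(Suc (Suc j)) = k * q^(Suc j) + q^j" using q2 by (simp add: algebra_simps)
      have I1: "s * kfib k j = p^j - q^j \<and> s * kFL k a b j = (a + b*s)*p^j + (b*s - a)*q^j"
        using 1 m Suc by simp
      have I2: "s * kfib k (Suc j) = p^(Suc j) - q^(Suc j) \<and> s * kFL k a b (Suc j) = (a + b*s)*p^(Suc j) + (b*s - a)*q^(Suc j)"
        using 1 m Suc by simp
      have "s * kfib k (Suc (Suc j)) = k * (s * kfib k (Suc j)) + s * kfib k j" by (simp add: algebra_simps)
      also have "\<dots> = k * (p^(Suc j) - q^(Suc j)) + (p^j - q^j)" using I1 I2 by presburger
      also have "\<dots> = p^(Suc (Suc j)) - q^(Suc (Suc j))" unfolding P Q by (simp add: algebra_simps)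
      finally have A: "s * kfib k (Suc (Suc j)) = p^(Suc (Suc j)) - q^(Suc (Suc j))" .
      have "s * kFL k a b (Suc (Suc j)) = k * (s * kFL k a b (Suc j)) + s * kFL k a b j" by (simp add: algebra_simps)
      also have "\<dots> = k * ((a + b*s)*p^(Suc j) + (b*s - a)*q^(Suc j)) + ((a + b*s)*p^j + (b*s - a)*q^j)"
        using I1 I2 by presburger
      also have "\<dots> = (a + b*s)*p^(Suc (Suc j)) + (b*s - a)*q^(Suc (Suc j))"
        unfolding P Q by (simp add: algebra_simps)
      finally show ?thesis using A m Suc by simp
    qed
  qed
qed

theorem theorem4p18:
  fixes k a b :: real and n r :: nat
  assumes "k > 0" and "a > 0" and "b > 0" and "r \<le> n"
  shows "kFL k a b (n - r) * kFL k a b (n + r) - (kFL k a b n)^2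
         = (-1) ^ (n - r + 1) * (a^2 - (k^2 + 4) * b^2) * (kfib k r)^2"
proof -
  define s where "s = sqrt (k^2 + 4)"
  have s2: "s^2 = k^2 + 4" unfolding s_def by simp
  have spos: "s > 0" proof -
    have "0 < k^2+4" by (smt (verit) zero_le_power2)
    thus ?thesis unfolding s_def by simp
  qed
  define p where "p = (k + s) / 2"
  define q where "q = (k - s) / 2"
  have pq: "p + q = k" "p * q = -1" "p - q = s"
    unfolding p_def q_def using s2 by (simp_all add: field_simps power2_eq_square)
  obtain m where mn: "n = m + r" using assms(4) le_iff_add by (metis add.commute)
  have nm: "n - r = m" "n + r = m + 2*r" using mn by auto
  define A where "A = a + b*s"
  define B where "B = b*s - a"
  have F: "s * kfib k r = p^r - q^r" using binet[OF pq] by blast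
  have S: "\<And>j. s * kFL k a b j = A*p^j + B*q^j" using binet[OF pq] A_def B_def by blast
  have pqm: "p^m * q^m = (-1)^m" by (metis pq(2) power_mult_distrib)
  have pqr: "p^r * q^r = (-1)^r" by (metis pq(2) power_mult_distrib)
  have AB: "A * B = b^2 * s^2 - a^2" unfolding A_def B_def by (simp add: algebra_simps power2_eq_square)
  have key: "(s * kFL k a b m) * (s * kFL k a b (m + 2*r)) - (s * kFL k a b (m + r))^2
      = A * B * (p^m*q^m) * (p^r - q^r)^2"
  proof -
    have e1: "p^(m+2*r) = p^m * (p^r)^2" "q^(m+2*r) = q^m * (q^r)^2" "p^(m+r) = p^m*p^r" "q^(m+r) = q^m*q^r"
      by (simp_all add: power_add power_mult mult.commute)
    show ?thesis unfolding S e1 by (simp add: power2_eq_square algebra_simps)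
  qed
  have "s^2 * (kFL k a b m * kFL k a b (m + 2*r) - (kFL k a b (m + r))^2)
      = s^2 * ((-1) ^ (m + 1) * (a^2 - (k^2 + 4) * b^2) * (kfib k r)^2)"
  proof -
    have "s^2 * (kFL k a b m * kFL k a b (m + 2*r) - (kFL k a b (m + r))^2)
        = A * B * (p^m*q^m) * (s * kfib k r)^2"
    proof -
      have "s^2 * (kFL k a b m * kFL k a b (m + 2*r) - (kFL k a b (m + r))^2)
         = (s * kFL k a b m) * (s * kFL k a b (m + 2*r)) - (s * kFL k a b (m + r))^2"
        by (simp add: algebra_simps power2_eq_square)
      also have "\<dots> = A * B * (p^m*q^m) * (p^r - q^r)^2" by (rule key)
      also have "\<dots> = A * B * (p^m*q^m) * (s * kfib k r)^2" using F by simp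
      finally show ?thesis .
    qed
    also have "\<dots> = s^2 * ((-1) ^ (m + 1) * (a^2 - (k^2 + 4) * b^2) * (kfib k r)^2)"
      unfolding AB pqm s2[symmetric] by (simp add: algebra_simps power2_eq_square)
    finally show ?thesis .
  qed
  hence "kFL k a b m * kFL k a b (m + 2*r) - (kFL k a b (m + r))^2
      = (-1) ^ (m + 1) * (a^2 - (k^2 + 4) * b^2) * (kfib k r)^2"
  proof -
    have "s^2 \<noteq> 0" using spos by simp
    thus ?thesis using \<open>s^2 * _ = s^2 * _\<close> mult_left_cancel by blast
  qed
  thus ?thesis unfolding nm by (simp only: mn)
qed

end
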